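(* Let $L\ge 1$ be an integer and $g$ a real polynomial of degree at most $L$ with $g(0)=g'(0)=0$. Let $a<0<b$, $\gamma\ge1$, and $0<\delta\le\min\{-a/4,\,b/4\}$ with \[ \delta<\max\Big\{\frac{b-a}{16L^2},\ \frac{\sqrt{|ab|}}{8L}\Big\}, \] and suppose $|g(x)|\le\gamma|x|+\delta$ for all $x\in[a,b]$. Then $g(x)\le 2\gamma|x|$ for all $x\in[a,b]$. *)

theory Defs
  imports "HOL-Computational_Algebra.Polynomial"
begin

end

theory Submission imports Defs "HOL-Complex_Analysis.Complex_Analysis" begin

lemma poly_sum_le:
  fixes p :: "'a::comm_ring_1 poly"
  assumes "degree p \<le> n"
  shows "poly p z = (\<Sum>k\<le>n. coeff p k * z ^ k)"
  unfolding poly_altdef by (rule sum.mono_neutral_left) (use assms in \<open>auto simp: coeff_eq_0\<close>)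

definition Fj :: "complex poly \<Rightarrow> nat \<Rightarrow> complex \<Rightarrow> complex" where
  "Fj p n w = (\<Sum>k\<le>n. coeff p k * w ^ (n - k) * ((w^2 + 1) / 2) ^ k)"

lemma Fj_eq:
  assumes "degree p \<le> n" "w \<noteq> 0"
  shows "Fj p n w = w ^ n * poly p ((w + 1/w) / 2)"
proof -
  have "w ^ n * poly p ((w + 1/w) / 2) = (\<Sum>k\<le>n. coeff p k * (w ^ n * ((w + 1/w) / 2) ^ k))"
    by (simp add: poly_sum_le[OF assms(1)] sum_distrib_left algebra_simps)
  also have "\<dots> = (\<Sum>k\<le>n. coeff p k * w ^ (n - k) * ((w^2 + 1) / 2) ^ k)"
  proof (rule sum.cong[OF refl])
    fix k assume "k \<in> {..n}"
    then have "w ^ n = w ^ (n - k) * w ^ k" by (simp add: power_add[symmetric])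
    moreover have "w ^ k * ((w + 1/w) / 2) ^ k = ((w^2 + 1) / 2) ^ k"
    proof -
      have "w * ((w + 1/w) / 2) = (w^2 + 1) / 2" using assms(2) by (simp add: field_simps power2_eq_square)
      then have "(w * ((w + 1/w) / 2)) ^ k = ((w^2 + 1) / 2) ^ k" by simp
      then show ?thesis by (simp only: power_mult_distrib)
    qed
    ultimately show "coeff p k * (w ^ n * ((w + 1/w) / 2) ^ k) = coeff p k * w ^ (n - k) * ((w^2 + 1) / 2) ^ k"
      by (simp add: mult.assoc)
  qed
  finally show ?thesis by (simp add: Fj_def)
qed

lemma Fj_holo: "Fj p n holomorphic_on S"
  unfolding Fj_def by (intro holomorphic_intros) auto

lemma Fj_cont: "continuous_on S (Fj p n)"
  by (intro holomorphic_on_imp_continuous_on Fj_holo)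

lemma poly_of_real_map: "poly (map_poly of_real p) (of_real x :: complex) = of_real (poly p x)"
  by (induction p) (auto simp: map_poly_pCons)

lemma pderiv_of_real_map:
  "pderiv (map_poly (of_real :: real \<Rightarrow> complex) p) = map_poly of_real (pderiv p)"
  by (rule poly_eqI) (simp add: coeff_pderiv coeff_map_poly)

lemma one_plus_pow_le_e:
  fixes x :: real assumes "0 \<le> x" "real n * x \<le> 1"
  shows "(1 + x) ^ n \<le> exp 1"
proof -
  have "(1 + x) ^ n \<le> exp x ^ n"
    using assms by (intro power_mono) (auto simp: exp_ge_add_one_self)
  also have "\<dots> = exp (real n * x)" by (simp add: exp_of_nat_mult)
  also have "\<dots> \<le> exp 1" using assms by simp
  finally show ?thesis .
qed

lemma bernstein:
  fixes p :: "real poly" and n :: nat and M u :: real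
  assumes deg: "degree p \<le> n" and bnd: "\<And>v. -1 \<le> v \<Longrightarrow> v \<le> 1 \<Longrightarrow> \<bar>poly p v\<bar> \<le> M"
    and u: "-1 < u" "u < 1"
  shows "\<bar>poly (pderiv p) u\<bar> * sqrt (1 - u^2) \<le> exp 1 * (real n + 1) * M"
proof -
  have M0: "0 \<le> M" using bnd[of 0] by auto
  show ?thesis
  proof (cases "n = 0")
    case True
    then have "pderiv p = 0" using deg pderiv_eq_0_iff by auto
    then show ?thesis using M0 by simp
  next
    case False
    define pc where "pc = map_poly (of_real :: real \<Rightarrow> complex) p"
    have degc: "degree pc \<le> n" using deg by (simp add: pc_def degree_map_poly)
    define J where "J = (\<lambda>z::complex. (z + 1/z) / 2)"
    have circ: "norm (Fj pc n w) \<le> M" if "norm w = 1" for w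
    proof -
      have w0: "w \<noteq> 0" using that by auto
      have "w * cnj w = 1" using complex_norm_square[of w] that by simp
      then have "1 / w = cnj w" using w0 by (simp add: field_simps)
      then have "(w + 1/w) / 2 = of_real (Re w)" by (simp add: complex_add_cnj)
      moreover have "\<bar>Re w\<bar> \<le> 1" using abs_Re_le_cmod[of w] that by simp
      ultimately have "norm (poly pc ((w + 1/w) / 2)) \<le> M"
        using bnd[of "Re w"] by (simp add: pc_def poly_of_real_map)
      then show ?thesis using Fj_eq[OF degc w0] that by (simp add: norm_mult norm_power)
    qed
    have disc: "norm (Fj pc n w) \<le> M" if "norm w \<le> 1" for w
      using maximum_modulus_frontier[of "Fj pc n" "cball 0 1" M w] that circ Fj_holo Fj_cont
      by auto
    define s where "s = sqrt (1 - u^2)"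
    have s0: "0 < s" using u by (simp add: s_def abs_square_less_1)
    have ss: "s^2 = 1 - u^2" using u by (simp add: s_def abs_square_le_1)
    define w0 where "w0 = Complex u s"
    have nw0: "norm w0 = 1" using ss by (simp add: w0_def cmod_def)
    define r where "r = 1 / (real n + 1)"
    have r0: "0 < r" and r1: "r \<le> 1/2" using False by (auto simp: r_def field_simps)
    have Pb: "norm (poly pc (J z)) \<le> exp 1 * M" if "norm (w0 - z) = r" for z
    proof -
      have lo: "1 - r \<le> norm z" and hi: "norm z \<le> 1 + r"
        using norm_triangle_ineq2[of w0 z] norm_triangle_ineq2[of z w0] that nw0
        by (auto simp: norm_minus_commute)
      have z0: "z \<noteq> 0" using lo r1 by auto
      show ?thesis
      proof (cases "norm z \<le> 1")
        case True
        have "norm z ^ n * norm (poly pc (J z)) \<le> M"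
          using disc[OF True] Fj_eq[OF degc z0] by (simp add: J_def norm_mult norm_power)
        moreover have "1 \<le> norm z ^ n * exp 1"
        proof -
          have "(1 + 1 / real n) ^ n \<le> exp 1"
            by (rule one_plus_pow_le_e) (use False in auto)
          moreover have "1 - r = 1 / (1 + 1 / real n)" using False
            by (simp add: r_def field_simps)
          ultimately have "(1 / (1 - r)) ^ n \<le> exp 1" by simp
          moreover have "(1 - r) ^ n \<le> norm z ^ n" using lo r1 by (intro power_mono) auto
          ultimately show ?thesis using r1
          proof -
            assume A: "(1 / (1 - r)) ^ n \<le> exp 1" and B: "(1 - r) ^ n \<le> norm z ^ n"
            have "1 = (1 - r) ^ n * (1 / (1 - r)) ^ n" using r1 by (simp add: power_mult_distrib[symmetric])
            also have "\<dots> \<le> (1 - r) ^ n * exp 1" using A r1 by (intro mult_left_mono) auto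
            also have "\<dots> \<le> norm z ^ n * exp 1" using B by (intro mult_right_mono) auto
            finally show ?thesis .
          qed
        qed
        ultimately show ?thesis using M0
        proof -
          assume A: "norm z ^ n * norm (poly pc (J z)) \<le> M" and B: "1 \<le> norm z ^ n * exp 1"
          have "norm (poly pc (J z)) = 1 * norm (poly pc (J z))" by simp
          also have "\<dots> \<le> (norm z ^ n * exp 1) * norm (poly pc (J z))"
            using B by (intro mult_right_mono) auto
          also have "\<dots> = exp 1 * (norm z ^ n * norm (poly pc (J z)))" by (simp add: algebra_simps)
          also have "\<dots> \<le> exp 1 * M" using A by (intro mult_left_mono) auto
          finally show ?thesis .
        qed
      next
        case False
        define z' where "z' = 1 / z"
        have nz': "norm z' \<le> 1" using False by (simp add: z'_def norm_divide divide_le_eq)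
        have z'0: "z' \<noteq> 0" using z0 by (simp add: z'_def)
        have Jz: "J z = (z' + 1/z') / 2" by (simp add: J_def z'_def add.commute)
        have "norm z' ^ n * norm (poly pc ((z' + 1/z') / 2)) \<le> M"
          using disc[OF nz'] Fj_eq[OF degc z'0] by (simp add: norm_mult norm_power)
        then have "norm z' ^ n * norm (poly pc (J z)) \<le> M" by (simp only: Jz)
        then have "norm (poly pc (J z)) \<le> M * norm z ^ n"
          using z0 by (simp add: z'_def norm_divide power_divide field_simps)
        also have "\<dots> \<le> M * exp 1"
        proof -
          have "(1 + r) ^ n \<le> exp 1"
            by (rule one_plus_pow_le_e) (use r0 in \<open>auto simp: r_def field_simps\<close>)
          moreover have "norm z ^ n \<le> (1 + r) ^ n" using hi by (intro power_mono) auto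
          ultimately show ?thesis using M0 by (intro mult_left_mono) auto
        qed
        finally show ?thesis by (simp add: mult.commute)
      qed
    qed
    have nz: "z \<noteq> 0" if "z \<in> cball w0 r" for z
    proof
      assume "z = 0"
      with that have "1 \<le> r" using nw0 by (simp add: dist_norm)
      with r1 show False by simp
    qed
    have holo: "(\<lambda>z. poly pc (J z)) holomorphic_on ball w0 r"
      unfolding J_def using nz by (intro holomorphic_intros) auto
    have cont: "continuous_on (cball w0 r) (\<lambda>z. poly pc (J z))"
      unfolding J_def using nz by (intro continuous_intros) auto
    have cau: "norm (deriv (\<lambda>z. poly pc (J z)) w0) \<le> exp 1 * M / r"
      using Cauchy_inequality[OF holo cont r0 Pb, of 1] by simp
    have w00: "w0 \<noteq> 0" using nw0 by auto
    have "((\<lambda>z. poly pc (J z)) has_field_derivative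
            poly (pderiv pc) (J w0) * ((1 - 1 / w0^2) / 2)) (at w0)"
      unfolding J_def using w00
      by (auto intro!: derivative_eq_intros simp: field_simps power2_eq_square)
    then have der: "deriv (\<lambda>z. poly pc (J z)) w0 = poly (pderiv pc) (J w0) * ((1 - 1 / w0^2) / 2)"
      by (rule DERIV_imp_deriv)
    have cw: "1 / w0 = Complex u (- s)"
    proof -
      have "w0 * Complex u (- s) = 1" using ss by (simp add: w0_def complex_eq_iff power2_eq_square)
      then show ?thesis using w00 by (simp add: field_simps)
    qed
    have Jw: "J w0 = of_real u" using cw by (simp add: J_def w0_def complex_eq_iff)
    have Dw: "(1 - 1 / w0^2) / 2 = Complex (s * s) (u * s)"
    proof -
      have "1 / w0^2 = (1/w0)^2" by (simp add: power_divide)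
      then show ?thesis using cw ss by (simp add: complex_eq_iff power2_eq_square algebra_simps)
    qed
    have nD: "norm (Complex (s * s) (u * s)) = s"
    proof -
      have "(s * s)^2 + (u * s)^2 = s^2 * (s^2 + u^2)" by (simp add: power2_eq_square algebra_simps)
      also have "\<dots> = s^2" using ss by simp
      finally have "(s * s)^2 + (u * s)^2 = s^2" .
      then show ?thesis using s0 by (simp add: cmod_def)
    qed
    have "norm (deriv (\<lambda>z. poly pc (J z)) w0) = \<bar>poly (pderiv p) u\<bar> * s"
      using der Jw Dw nD by (simp add: norm_mult pc_def pderiv_of_real_map poly_of_real_map)
    with cau show ?thesis by (simp add: s_def r_def mult_ac)
  qed
qed


lemma bernstein_interval:
  fixes h :: "real poly" and n :: nat and M a b x :: real
  assumes deg: "degree h \<le> n" and ab: "a < b"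
    and bnd: "\<And>y. a \<le> y \<Longrightarrow> y \<le> b \<Longrightarrow> \<bar>poly h y\<bar> \<le> M"
    and x: "a < x" "x < b"
  shows "\<bar>poly (pderiv h) x\<bar> * sqrt ((x - a) * (b - x)) \<le> exp 1 * (real n + 1) * M"
proof -
  define c where "c = (a + b) / 2"
  define d where "d = (b - a) / 2"
  have d0: "0 < d" using ab by (simp add: d_def)
  define q where "q = pcompose h [:c, d:]"
  have degq: "degree q \<le> n"
    using degree_pcompose_le[of h "[:c, d:]"] deg d0 by (simp add: q_def)
  have pq: "poly q v = poly h (c + d * v)" for v by (simp add: q_def poly_pcompose mult.commute)
  have pdq: "poly (pderiv q) v = poly (pderiv h) (c + d * v) * d" for v
    by (simp add: q_def pderiv_pcompose poly_pcompose pderiv_pCons mult.commute)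
  define u where "u = (x - c) / d"
  have xu: "x = c + d * u" using d0 by (simp add: u_def)
  have bq: "\<bar>poly q v\<bar> \<le> M" if "-1 \<le> v" "v \<le> 1" for v
  proof -
    have "a \<le> c + d * v" "c + d * v \<le> b"
      using that d0 ab mult_left_mono[of "-1" v d] mult_left_mono[of v 1 d]
      by (auto simp: c_def d_def field_simps)
    then show ?thesis using bnd pq by simp
  qed
  have u1: "-1 < u" "u < 1" using x d0 ab by (auto simp: u_def c_def d_def field_simps)
  have B: "\<bar>poly (pderiv q) u\<bar> * sqrt (1 - u^2) \<le> exp 1 * (real n + 1) * M"
    by (rule bernstein[OF degq bq u1]) auto
  have "sqrt ((x - a) * (b - x)) = d * sqrt (1 - u^2)"
  proof -
    have "(x - a) * (b - x) = d^2 * (1 - u^2)"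
    proof -
      have du: "d * u = x - c" using d0 by (simp add: u_def)
      have "d^2 * (1 - u^2) = d^2 - (d * u)^2" by (simp add: algebra_simps power_mult_distrib)
      also have "\<dots> = d^2 - (x - c)^2" using du by simp
      also have "\<dots> = (x - a) * (b - x)" by (simp add: c_def d_def power2_eq_square field_simps)
      finally show ?thesis by simp
    qed
    then show ?thesis using d0 by (simp add: real_sqrt_mult)
  qed
  moreover have "\<bar>poly (pderiv q) u\<bar> = \<bar>poly (pderiv h) x\<bar> * d"
    using pdq[of u] d0 xu by (simp add: abs_mult)
  ultimately show ?thesis using B by (simp add: mult_ac)
qed

lemma key_ineq:
  fixes a b \<delta> e L :: real
  assumes "a < 0" "0 < b" "0 < \<delta>" "\<delta> \<le> - a / 4" "\<delta> \<le> b / 4" "1 \<le> L" "0 < e" "e < 3"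
    and "\<delta> < max ((b - a) / (16 * L ^ 2)) (sqrt \<bar>a * b\<bar> / (8 * L))"
  shows "4 * \<delta> * e * L < 3 * sqrt \<bar>a * b\<bar>"
proof -
  define S where "S = sqrt \<bar>a * b\<bar>"
  have ab: "\<bar>a * b\<bar> = - a * b" using assms by (simp add: abs_mult)
  have S0: "0 < S" using mult_neg_pos[OF assms(1) assms(2)] by (simp add: S_def)
  have SS: "S^2 = - a * b" using ab by (simp add: S_def)
  consider "\<delta> < sqrt \<bar>a * b\<bar> / (8 * L)" | "\<delta> < (b - a) / (16 * L ^ 2)" using assms(9) by linarith
  then show ?thesis
  proof cases
    case 1
    have "\<delta> * (4 * e * L) < (S / (8 * L)) * (4 * e * L)"
      using 1 assms by (intro mult_strict_right_mono) (auto simp: S_def)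
    also have "\<dots> = e * S / 2" using assms by (simp add: field_simps)
    also have "\<dots> < 3 * S" using assms S0 by simp
    finally show ?thesis by (simp add: S_def mult_ac)
  next
    case 2
    have L2: "16 * L^2 * \<delta> < b - a" using 2 assms by (simp add: field_simps)
    have "\<delta> * (b - a) \<le> - a * b / 2"
    proof (cases "- a \<le> b")
      case True
      have "\<delta> * (b - a) \<le> (- a / 4) * (b - a)" using assms by (intro mult_right_mono) auto
      also have "\<dots> \<le> (- a / 4) * (2 * b)" using assms True by (intro mult_left_mono) auto
      finally show ?thesis by simp
    next
      case False
      have "\<delta> * (b - a) \<le> (b / 4) * (b - a)" using assms by (intro mult_right_mono) auto
      also have "\<dots> \<le> (b / 4) * (- 2 * a)" using assms False by (intro mult_left_mono) auto
      finally show ?thesis by simp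
    qed
    have "(4 * \<delta> * e * L)^2 = e^2 * \<delta> * (16 * L^2 * \<delta>)" by (simp add: power2_eq_square)
    also have "\<dots> \<le> e^2 * \<delta> * (b - a)" using L2 assms by (intro mult_left_mono) auto
    also have "\<dots> = e^2 * (\<delta> * (b - a))" by simp
    also have "\<dots> \<le> e^2 * (- a * b / 2)" using \<open>\<delta> * (b - a) \<le> - a * b / 2\<close> by (intro mult_left_mono) auto
    also have "\<dots> < 9 * (- a * b)"
    proof -
      have "e^2 < 3^2" using assms by (intro power_strict_mono) auto
      moreover have "0 < - a * b" using mult_neg_pos[OF assms(1) assms(2)] by simp
      ultimately have "e^2 * (- a * b / 2) < 9 * (- a * b / 2)"
        by (intro mult_strict_right_mono) auto
      then show ?thesis using \<open>0 < - a * b\<close> by linarith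
    qed
    also have "\<dots> = (3 * S)^2" using SS by (simp add: power_mult_distrib)
    finally have "(4 * \<delta> * e * L)^2 < (3 * S)^2" .
    then have "4 * \<delta> * e * L < 3 * S" by (rule power2_less_imp_less) (use S0 in simp)
    then show ?thesis by (simp add: S_def)
  qed
qed


theorem lemma3p14:
  fixes L :: nat and g :: "real poly" and a b \<gamma> \<delta> :: real
  assumes "L \<ge> 1"
    and "degree g \<le> L"
    and "poly g 0 = 0" and "poly (pderiv g) 0 = 0"
    and "a < 0" and "0 < b"
    and "\<gamma> \<ge> 1"
    and "0 < \<delta>" and "\<delta> \<le> min (- a / 4) (b / 4)"
    and "\<delta> < max ((b - a) / (16 * real L ^ 2)) (sqrt \<bar>a * b\<bar> / (8 * real L))"
    and "\<forall>x\<in>{a..b}. \<bar>poly g x\<bar> \<le> \<gamma> * \<bar>x\<bar> + \<delta>"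
  shows "\<forall>x\<in>{a..b}. poly g x \<le> 2 * \<gamma> * \<bar>x\<bar>"
proof -
  have "[:-0, 1:] dvd g" using assms(3) poly_eq_0_iff_dvd by blast
  then obtain h where gh: "g = [:0, 1:] * h" by (auto elim: dvdE)
  have pg: "poly g x = x * poly h x" for x by (simp add: gh)
  have "pderiv g = h + [:0,1:] * pderiv h" by (simp add: gh pderiv_mult pderiv_pCons)
  then have h0: "poly h 0 = 0" using assms(4) by simp
  have degh: "degree h \<le> L - 1"
  proof (cases "h = 0")
    case True then show ?thesis by simp
  next
    case False
    then have "degree g = degree h + 1" by (simp add: gh degree_mult_eq)
    then show ?thesis using assms(2) by simp
  qed
  have hb: "\<bar>x\<bar> * \<bar>poly h x\<bar> \<le> \<gamma> * \<bar>x\<bar> + \<delta>" if "x \<in> {a..b}" for x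
  proof -
    have "\<bar>poly g x\<bar> \<le> \<gamma> * \<bar>x\<bar> + \<delta>" using assms(11) that by blast
    then show ?thesis by (simp only: pg abs_mult)
  qed
  have ab: "a < b" using assms by simp
  have "\<exists>x\<in>{a..b}. \<forall>y\<in>{a..b}. \<bar>poly h y\<bar> \<le> \<bar>poly h x\<bar>"
    by (rule continuous_attains_sup) (use ab in \<open>auto intro!: continuous_intros\<close>)
  then obtain xs where xs: "xs \<in> {a..b}" and xsmax: "\<And>y. y \<in> {a..b} \<Longrightarrow> \<bar>poly h y\<bar> \<le> \<bar>poly h xs\<bar>"
    by blast
  define M where "M = \<bar>poly h xs\<bar>"
  have M0: "0 \<le> M" by (simp add: M_def)
  have g0: "0 < \<gamma>" using assms(7) by simp
  have Mb: "M \<le> 2 * \<gamma>"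
  proof (cases "\<delta> / \<gamma> \<le> \<bar>xs\<bar>")
    case True
    have "\<delta> \<le> \<gamma> * \<bar>xs\<bar>" using True g0 by (simp add: divide_le_eq mult.commute)
    then have "\<bar>xs\<bar> * M \<le> \<bar>xs\<bar> * (2 * \<gamma>)" using hb[OF xs] by (simp add: M_def algebra_simps)
    moreover have "0 < \<bar>xs\<bar>" using True divide_pos_pos[OF assms(8) g0] by linarith
    ultimately show ?thesis by simp
  next
    case False
    have "\<delta> / \<gamma> \<le> \<delta>" using assms(7,8) by (simp add: divide_le_eq)
    with False have xsd: "\<bar>xs\<bar> < \<delta>" by simp
    obtain \<xi> where \<xi>: "\<xi> \<in> {min 0 xs..max 0 xs}"
      and mv: "poly h xs - poly h 0 = (xs - 0) * poly (pderiv h) \<xi>"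
      using poly_MVT'[of 0 xs "{min 0 xs..max 0 xs}" h] by auto
    have xia: "\<bar>\<xi>\<bar> \<le> \<bar>xs\<bar>" using \<xi> by auto
    have a\<xi>: "a < \<xi>" "\<xi> < b" using xia xsd assms(5,6,9) by auto
    define D where "D = \<bar>poly (pderiv h) \<xi>\<bar>"
    define Q where "Q = sqrt ((\<xi> - a) * (b - \<xi>))"
    define S where "S = sqrt \<bar>a * b\<bar>"
    have MB: "M \<le> \<delta> * D"
    proof -
      have "M = \<bar>xs\<bar> * D" using mv h0 by (simp add: M_def D_def abs_mult)
      also have "\<dots> \<le> \<delta> * D" using xsd by (intro mult_right_mono) (auto simp: D_def)
      finally show ?thesis .
    qed
    have LL: "real (L - 1) + 1 = real L" using assms(1) by simp
    have Bern: "D * Q \<le> exp 1 * real L * M"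
      using bernstein_interval[OF degh ab _ a\<xi>, of M] xsmax LL by (auto simp: M_def D_def Q_def)
    have sq: "3/4 * S \<le> Q"
    proof -
      have "\<xi> - a \<ge> 3/4 * (- a)" "b - \<xi> \<ge> 3/4 * b" using xia xsd assms(5,6,9) by auto
      then have "(3/4 * (- a)) * (3/4 * b) \<le> (\<xi> - a) * (b - \<xi>)"
        using assms(5,6) by (intro mult_mono) auto
      moreover have "\<bar>a * b\<bar> = - a * b" using assms(5,6) by (simp add: abs_mult)
      ultimately have "(3/4)^2 * \<bar>a * b\<bar> \<le> (\<xi> - a) * (b - \<xi>)" by (simp add: power2_eq_square algebra_simps)
      then have "sqrt ((3/4)^2 * \<bar>a * b\<bar>) \<le> Q" unfolding Q_def by (rule real_sqrt_le_mono)
      then show ?thesis by (simp add: S_def real_sqrt_mult)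
    qed
    have key: "4 * \<delta> * exp 1 * real L < 3 * S"
      unfolding S_def
      by (rule key_ineq) (use assms e_less_272 in auto)
    have S0: "0 \<le> S" by (simp add: S_def)
    have "3/4 * S * M \<le> 3/4 * S * (\<delta> * D)" using MB S0 by (intro mult_left_mono) auto
    also have "\<dots> = (\<delta> * D) * (3/4 * S)" by simp
    also have "\<dots> \<le> (\<delta> * D) * Q" using sq assms(8) by (intro mult_left_mono) (auto simp: D_def)
    also have "\<dots> = \<delta> * (D * Q)" by simp
    also have "\<dots> \<le> \<delta> * (exp 1 * real L * M)" using Bern assms(8) by (intro mult_left_mono) auto
    finally have "3/4 * S * M \<le> (\<delta> * exp 1 * real L) * M" by (simp add: mult_ac)
    moreover have "\<delta> * exp 1 * real L < 3/4 * S" using key by simp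
    ultimately have "M \<le> 0"
    proof -
      assume A: "3/4 * S * M \<le> (\<delta> * exp 1 * real L) * M" and B: "\<delta> * exp 1 * real L < 3/4 * S"
      show "M \<le> 0"
      proof (rule ccontr)
        assume "\<not> M \<le> 0"
        then have "0 < M" by simp
        with A have "3/4 * S \<le> \<delta> * exp 1 * real L" by (simp add: mult_le_cancel_right)
        with B show False by simp
      qed
    qed
    then show ?thesis using g0 by simp
  qed
  show ?thesis
  proof
    fix x assume x: "x \<in> {a..b}"
    have "poly g x \<le> \<bar>x\<bar> * \<bar>poly h x\<bar>" using pg[of x] by (simp add: abs_mult[symmetric])
    also have "\<dots> \<le> \<bar>x\<bar> * M" using xsmax[OF x] by (intro mult_left_mono) (auto simp: M_def)
    also have "\<dots> \<le> \<bar>x\<bar> * (2 * \<gamma>)" using Mb by (intro mult_left_mono) auto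
    finally show "poly g x \<le> 2 * \<gamma> * \<bar>x\<bar>" by (simp add: mult_ac)
  qed
qed

end
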